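(* Let $\pi$ be a partition in $\mathbb{C}(3,3)$ having at least one odd part. Then there exists a unique integer $m\ge0$ such that $\pi\in\mathbb{C}_{=}(3,3|m)$.
   Context: A partition $\pi=(\pi_1,\dots,\pi_\ell)$ is a finite non-increasing sequence of positive integers; "$a$ occurs in $\pi$" means $a=\pi_i$ for some $i$. Göllnitz–Gordon marking: $GG(\pi)$ assigns a positive integer (mark) to each part, processing the parts from smallest to largest; $\pi_i$ receives the smallest positive integer different from the marks of all parts $\pi_g$ with $g>i$ and $\pi_i-\pi_g\le 2$, where $\pi_i-\pi_g<2$ is required when $\pi_i$ is odd. An "$r$-marked part $a$" is a part equal to $a$ with mark $r$. $N_i(\pi)$ is the number of parts with mark $i$; $\pi^{(i)}_1\ge\dots\ge\pi^{(i)}_{N_i(\pi)}$ are the parts with mark $i$, with $\pi^{(i)}_0=+\infty$, $\pi^{(i)}_{N_i(\pi)+1}=-\infty$. $\mathbb{C}(k,r)$: partitions with (i) no odd part repeated; (ii) $\pi_i\ge\pi_{i+k-1}+2$ for $1\le i\le\ell-k+1$, strict if $\pi_i$ even; (iii) at most $r-1$ parts $\le 2$. Starting types: for $\pi\in\mathbb{C}(k,r)$ with $N_2=N_2(\pi)\ge1$, let $l$ be the largest integer in $\{0,\dots,N_2\}$ such that no odd part of $\pi$ is $\ge\pi^{(2)}_l$; for $l<i\le N_2$, $\pi^{(2)}_i$ has type $s_{-1}$. For $b=1,\dots,l$ in increasing order, type and auxiliary $\sigma_b$: for $b=1$: Case 1: 1-marked part $\pi^{(2)}_1-1$ exists and $\pi^{(2)}_1+2$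 does not occur: type $s_0$, $\sigma_1=\pi^{(2)}_1-1$; Case 2: 1-marked $\pi^{(2)}_1-2$ exists and $\pi^{(2)}_1+2$ does not occur: type $s_1$, $\sigma_1=\pi^{(2)}_1-2$; Case 3: 1-marked $\pi^{(2)}_1+2$ exists: type $s_2$, $\sigma_1=\pi^{(2)}_1+2$; Case 4: 1-marked $\pi^{(2)}_1$ exists: type $s_3$, $\sigma_1=\pi^{(2)}_1$. For $2\le b\le l$: Case 1: 1-marked $\pi^{(2)}_b-1$ exists and, if a 1-marked $\pi^{(2)}_b+2$ exists, $\sigma_{b-1}=\pi^{(2)}_b+2$: type $s_0$, $\sigma_b=\pi^{(2)}_b-1$; Case 2: same with $\pi^{(2)}_b-2$: type $s_1$, $\sigma_b=\pi^{(2)}_b-2$; Case 3: 1-marked $\pi^{(2)}_b+2$ exists and $\sigma_{b-1}\ne\pi^{(2)}_b+2$: type $s_2$, $\sigma_b=\pi^{(2)}_b+2$; Case 4: 1-marked $\pi^{(2)}_b$ exists: type $s_3$, $\sigma_b=\pi^{(2)}_b$. $\mathbb{C}_{=}(k,r|p,t)$ (for $p,t\ge0$): the set of $\pi\in\mathbb{C}(k,r)$ such that (1) the largest odd part of $\pi$ is $2t+1$; (2) the mark of $2t+1$ in $GG(\pi)$ is at most $2$; (3) $\pi^{(2)}_p\ge 2t+2$ and $\pi^{(2)}_{p+1}\le 2t+2$; (4) if there is a 2-marked part $2t+2$ of starting type $s_0$, then $\pi^{(2)}_{p+1}=2t+2$ and there exists $1\le i\le p+1$ with $\pi^{(2)}_i=\pi^{(2)}_{p+1}+4(p-i+1)$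 and $\pi^{(2)}_i$ occurring exactly once in $\pi$; (5) if there is a 2-marked part $2t+2$ of starting type $s_2$, then $\pi^{(2)}_p=2t+2$; (6) if $2t+2$ occurs in $\pi$ and there is no 2-marked part $2t+2$, then $\pi^{(2)}_p=2t+4$, it is of starting type $s_3$, and there exists $1\le i\le p$ with $\pi^{(2)}_i=\pi^{(2)}_p+4(p-i)$ such that $\pi^{(2)}_i+2$ does not occur in $\pi$. For $m\ge 0$, $\mathbb{C}_{=}(k,r|m)=\bigcup_{p,t\ge0,\ p+t=m}\mathbb{C}_{=}(k,r|p,t)$. *)

theory Defs
  imports Main "HOL-Library.Extended_Real"
begin

text \<open>A partition is a finite non-increasing list of positive integers;
  list index j (0-based) corresponds to the part \<pi>_{j+1}.\<close>

definition is_partition :: "nat list \<Rightarrow> bool" where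
  "is_partition \<pi> \<longleftrightarrow> sorted_wrt (\<ge>) \<pi> \<and> (\<forall>x\<in>set \<pi>. 0 < x)"

text \<open>Goellnitz-Gordon marking, computed from the smallest part (end of the list)
  to the largest.  gg \<pi> ! j is the mark of the part \<pi> ! j.\<close>

fun gg :: "nat list \<Rightarrow> nat list" where
  "gg [] = []"
| "gg (x # xs) =
     (let ms = gg xs;
          bad = {ms ! g | g. g < length xs \<and> int x - int (xs ! g) \<le> 2 \<and>
                              (odd x \<longrightarrow> int x - int (xs ! g) < 2)}
      in (LEAST m. 0 < m \<and> m \<notin> bad) # ms)"

definition marked_parts :: "nat list \<Rightarrow> nat \<Rightarrow> nat list" where
  "marked_parts \<pi> i = [\<pi> ! j. j \<leftarrow> [0..<length \<pi>], gg \<pi> ! j = i]"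

definition Nmark :: "nat list \<Rightarrow> nat \<Rightarrow> nat" where
  "Nmark \<pi> i = length (marked_parts \<pi> i)"

text \<open>\<pi>^(i)_j with the conventions \<pi>^(i)_0 = +\<infinity> and \<pi>^(i)_j = -\<infinity> for j > N_i.\<close>
definition pm :: "nat list \<Rightarrow> nat \<Rightarrow> nat \<Rightarrow> ereal" where
  "pm \<pi> i j = (if j = 0 then \<infinity>
               else if j \<le> Nmark \<pi> i then ereal (real (marked_parts \<pi> i ! (j - 1)))
               else -\<infinity>)"

text \<open>\<pi>^(2)_b as a natural number, meaningful for 1 \<le> b \<le> N_2.\<close>
definition P2 :: "nat list \<Rightarrow> nat \<Rightarrow> nat" where
  "P2 \<pi> b = marked_parts \<pi> 2 ! (b - 1)"

definition one_marked :: "nat list \<Rightarrow> nat \<Rightarrow> bool" where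
  "one_marked \<pi> a \<longleftrightarrow> (\<exists>j<length \<pi>. \<pi> ! j = a \<and> gg \<pi> ! j = 1)"

definition two_marked :: "nat list \<Rightarrow> nat \<Rightarrow> bool" where
  "two_marked \<pi> a \<longleftrightarrow> (\<exists>j<length \<pi>. \<pi> ! j = a \<and> gg \<pi> ! j = 2)"

definition inC :: "nat \<Rightarrow> nat \<Rightarrow> nat list \<Rightarrow> bool" where
  "inC k r \<pi> \<longleftrightarrow>
     (\<forall>i j. i < length \<pi> \<and> j < length \<pi> \<and> i \<noteq> j \<and> odd (\<pi> ! i) \<longrightarrow> \<pi> ! i \<noteq> \<pi> ! j) \<and>
     (\<forall>i. i + k - 1 < length \<pi> \<longrightarrow>
          \<pi> ! i \<ge> \<pi> ! (i + k - 1) + 2 \<and>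
          (even (\<pi> ! i) \<longrightarrow> \<pi> ! i > \<pi> ! (i + k - 1) + 2)) \<and>
     length (filter (\<lambda>x. x \<le> 2) \<pi>) \<le> r - 1"

text \<open>Starting types.  SNone is a default never reached when one of the four cases applies.\<close>
datatype stype = Sm1 | S0 | S1 | S2 | S3 | SNone

text \<open>sdata \<pi> b = (type of \<pi>^(2)_b, \<sigma>_b) computed by the case rules, for b \<ge> 1.\<close>
fun sdata :: "nat list \<Rightarrow> nat \<Rightarrow> stype \<times> nat option" where
  "sdata \<pi> 0 = (SNone, None)"
| "sdata \<pi> (Suc b) =
     (let x = P2 \<pi> (Suc b) in
      if b = 0 then
        (if one_marked \<pi> (x - 1) \<and> x + 2 \<notin> set \<pi> then (S0, Some (x - 1))
         else if one_marked \<pi> (x - 2) \<and> x + 2 \<notin> set \<pi> then (S1, Some (x - 2))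
         else if one_marked \<pi> (x + 2) then (S2, Some (x + 2))
         else if one_marked \<pi> x then (S3, Some x)
         else (SNone, None))
      else
        (let \<sigma> = snd (sdata \<pi> b) in
         if one_marked \<pi> (x - 1) \<and> (one_marked \<pi> (x + 2) \<longrightarrow> \<sigma> = Some (x + 2))
           then (S0, Some (x - 1))
         else if one_marked \<pi> (x - 2) \<and> (one_marked \<pi> (x + 2) \<longrightarrow> \<sigma> = Some (x + 2))
           then (S1, Some (x - 2))
         else if one_marked \<pi> (x + 2) \<and> \<sigma> \<noteq> Some (x + 2) then (S2, Some (x + 2))
         else if one_marked \<pi> x then (S3, Some x)
         else (SNone, None)))"

definition lval :: "nat list \<Rightarrow> nat" where
  "lval \<pi> = (GREATEST l. l \<le> Nmark \<pi> 2 \<and>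
                (\<forall>y\<in>set \<pi>. odd y \<longrightarrow> ereal (real y) < pm \<pi> 2 l))"

definition start_type :: "nat list \<Rightarrow> nat \<Rightarrow> stype" where
  "start_type \<pi> b = (if b \<le> lval \<pi> then fst (sdata \<pi> b) else Sm1)"

definition has_2marked_of_type :: "nat list \<Rightarrow> nat \<Rightarrow> stype \<Rightarrow> bool" where
  "has_2marked_of_type \<pi> a s \<longleftrightarrow>
     (\<exists>b. 1 \<le> b \<and> b \<le> Nmark \<pi> 2 \<and> P2 \<pi> b = a \<and> start_type \<pi> b = s)"

definition inCeq_pt :: "nat \<Rightarrow> nat \<Rightarrow> nat \<Rightarrow> nat \<Rightarrow> nat list \<Rightarrow> bool" where
  "inCeq_pt k r p t \<pi> \<longleftrightarrow>
     inC k r \<pi> \<and>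
     \<comment> \<open>(1)\<close>
     (2*t+1 \<in> set \<pi> \<and> (\<forall>y\<in>set \<pi>. odd y \<longrightarrow> y \<le> 2*t+1)) \<and>
     \<comment> \<open>(2)\<close>
     (\<forall>j<length \<pi>. \<pi> ! j = 2*t+1 \<longrightarrow> gg \<pi> ! j \<le> 2) \<and>
     \<comment> \<open>(3)\<close>
     pm \<pi> 2 p \<ge> ereal (real (2*t+2)) \<and> pm \<pi> 2 (p+1) \<le> ereal (real (2*t+2)) \<and>
     \<comment> \<open>(4)\<close>
     (has_2marked_of_type \<pi> (2*t+2) S0 \<longrightarrow>
        pm \<pi> 2 (p+1) = ereal (real (2*t+2)) \<and>
        (\<exists>i. 1 \<le> i \<and> i \<le> p+1 \<and>
             pm \<pi> 2 i = pm \<pi> 2 (p+1) + ereal (real (4*(p+1-i))) \<and>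
             (\<exists>x. pm \<pi> 2 i = ereal (real x) \<and> count_list \<pi> x = 1))) \<and>
     \<comment> \<open>(5)\<close>
     (has_2marked_of_type \<pi> (2*t+2) S2 \<longrightarrow> pm \<pi> 2 p = ereal (real (2*t+2))) \<and>
     \<comment> \<open>(6)\<close>
     (2*t+2 \<in> set \<pi> \<and> \<not> two_marked \<pi> (2*t+2) \<longrightarrow>
        pm \<pi> 2 p = ereal (real (2*t+4)) \<and> start_type \<pi> p = S3 \<and>
        (\<exists>i. 1 \<le> i \<and> i \<le> p \<and>
             pm \<pi> 2 i = pm \<pi> 2 p + ereal (real (4*(p-i))) \<and>
             (\<exists>x. pm \<pi> 2 i = ereal (real x) \<and> x + 2 \<notin> set \<pi>)))"

definition inCeq :: "nat \<Rightarrow> nat \<Rightarrow> nat \<Rightarrow> nat list \<Rightarrow> bool" where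
  "inCeq k r m \<pi> \<longleftrightarrow> (\<exists>p t. p + t = m \<and> inCeq_pt k r p t \<pi>)"

end

theory Submission
  imports Defs
begin

definition gap3 :: "nat list \<Rightarrow> bool" where
 "gap3 xs \<longleftrightarrow> (\<forall>i. i+2 < length xs \<longrightarrow> xs!(i+2) + 2 \<le> xs!i \<and> (even (xs!i) \<longrightarrow> xs!(i+2)+2 < xs!i))"

lemma inC33_gap3: "inC 3 3 xs \<Longrightarrow> gap3 xs"
  unfolding inC_def gap3_def by (auto simp: numeral_eq_Suc)

definition inr :: "nat \<Rightarrow> nat \<Rightarrow> bool" where
  "inr x y \<longleftrightarrow> int x - int y \<le> 2 \<and> (odd x \<longrightarrow> int x - int y < 2)"

lemma length_gg[simp]: "length (gg xs) = length xs"
  by (induction xs) (simp_all add: Let_def)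

lemma gg_Cons_Suc[simp]: "gg (x#xs) ! Suc j = gg xs ! j"
  by (simp add: Let_def)

lemma least_empty: "(LEAST m::nat. 0 < m \<and> m \<notin> {}) = 1"
  by (rule Least_equality) auto

lemma least_single: "(LEAST m::nat. 0 < m \<and> m \<notin> {c}) = (if c = 1 then 2 else 1)"
  by (cases "c = 1") (auto intro!: Least_equality)

lemma gg_rule:
  assumes "sorted_wrt (\<ge>) xs" "gap3 xs" "j < length xs"
  shows "gg xs ! j = (if Suc j < length xs \<and> inr (xs!j) (xs!Suc j) \<and> gg xs ! Suc j = 1 then 2 else 1)"
using assms proof (induction xs arbitrary: j)
  case Nil then show ?case by simp
next
  case (Cons x xs)
  have s: "sorted_wrt (\<ge>) xs" using Cons.prems(1) by simp
  have g: "gap3 xs" using Cons.prems(2) unfolding gap3_def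
  proof (intro allI impI)
    fix i assume H: "\<forall>i. i + 2 < length (x # xs) \<longrightarrow> (x # xs) ! (i + 2) + 2 \<le> (x # xs) ! i \<and>
           (even ((x # xs) ! i) \<longrightarrow> (x # xs) ! (i + 2) + 2 < (x # xs) ! i)" and "i + 2 < length xs"
    then show "xs ! (i + 2) + 2 \<le> xs ! i \<and> (even (xs ! i) \<longrightarrow> xs ! (i + 2) + 2 < xs ! i)"
      using H[rule_format, of "Suc i"] by simp
  qed
  show ?case
  proof (cases j)
    case (Suc j') then show ?thesis using Cons.IH[OF s g, of j'] Cons.prems(3) by (simp del: gg.simps)
  next
    case 0
    define bad where "bad = {gg xs ! g | g. g < length xs \<and> int x - int (xs ! g) \<le> 2 \<and> (odd x \<longrightarrow> int x - int (xs ! g) < 2)}"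
    have e: "gg (x#xs) ! 0 = (LEAST m. 0 < m \<and> m \<notin> bad)" by (simp add: bad_def Let_def)
    have far: "\<not> inr x (xs!g)" if "1 \<le> g" "g < length xs" for g
    proof -
      have "xs!g \<le> xs!1"
      proof (cases "g = 1")
        case False then show ?thesis using sorted_wrt_nth_less[OF s, of 1 g] that by simp
      qed simp
      moreover have "xs!1 + 2 \<le> x \<and> (even x \<longrightarrow> xs!1 + 2 < x)"
        using Cons.prems(2) that unfolding gap3_def by (auto dest!: spec[of _ 0])
      ultimately show ?thesis unfolding inr_def by auto
    qed
    have "bad = (if xs \<noteq> [] \<and> inr x (xs!0) then {gg xs ! 0} else {})"
    proof -
      have "bad = {gg xs ! g | g. g < length xs \<and> inr x (xs!g)}" unfolding bad_def inr_def by simp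
      also have "\<dots> = {gg xs ! g | g. g = 0 \<and> g < length xs \<and> inr x (xs!g)}"
        using far by (metis One_nat_def less_one linorder_not_less)
      finally show ?thesis by auto
    qed
    then show ?thesis using e 0 least_empty least_single by (auto simp: Let_def)
  qed
qed


lemma lc_eq: "concat (map (\<lambda>j. if P j then [f j] else []) xs) = map f (filter P xs)"
  by (induction xs) auto

lemma mp_eq: "marked_parts xs i = map (nth xs) (filter (\<lambda>j. gg xs ! j = i) [0..<length xs])"
  unfolding marked_parts_def by (simp add: lc_eq)

lemma mem_mp: "x \<in> set (marked_parts xs 2) \<longleftrightarrow> two_marked xs x"
  unfolding mp_eq two_marked_def by auto

lemma two_strict:
  assumes s: "sorted_wrt (\<ge>) xs" and g: "gap3 xs" and jj: "j < j'" "j' < length xs"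
    and m: "gg xs ! j = 2" "gg xs ! j' = 2"
  shows "xs!j' < xs!j"
proof (cases "j' = Suc j")
  case True
  have le: "xs!j' \<le> xs!j" using sorted_wrt_nth_less[OF s jj] by simp
  show ?thesis
  proof (rule ccontr)
    assume "\<not> ?thesis"
    then have eq: "xs!j' = xs!j" using le by simp
    have "gg xs ! j = (if Suc j < length xs \<and> inr (xs!j) (xs!Suc j) \<and> gg xs ! Suc j = 1 then 2 else 1)"
      using gg_rule[OF s g] jj by simp
    then show False using m True by simp
  qed
next
  case False
  then have "Suc (Suc j) \<le> j'" using jj by simp
  then have "xs!j' \<le> xs!(j+2)"
    using sorted_wrt_nth_less[OF s, of "j+2" j'] jj by (cases "j' = j+2") auto
  moreover have "xs!(j+2) + 2 \<le> xs!j" using g jj \<open>Suc (Suc j) \<le> j'\<close> unfolding gap3_def by auto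
  ultimately show ?thesis by simp
qed

lemma mp_sorted:
  assumes s: "sorted_wrt (\<ge>) xs" and g: "gap3 xs"
  shows "sorted_wrt (>) (marked_parts xs 2)"
  unfolding mp_eq
proof (rule sorted_wrt_map_mono)
  show "sorted_wrt (<) (filter (\<lambda>j. gg xs ! j = 2) [0..<length xs])"
    by (rule sorted_wrt_filter) (rule sorted_wrt_upt)
next
  fix j j' assume "j \<in> set (filter (\<lambda>j. gg xs ! j = 2) [0..<length xs])"
    "j' \<in> set (filter (\<lambda>j. gg xs ! j = 2) [0..<length xs])" "j < j'"
  then show "xs ! j' < xs ! j" using two_strict[OF s g] by auto
qed

lemma pm_beyond: "Nmark xs 2 < j \<Longrightarrow> pm xs 2 j = -\<infinity>"
  unfolding pm_def by auto

lemma pm_strict: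
  assumes L: "sorted_wrt (>) (marked_parts xs 2)" and ij: "i < j" "j \<le> Nmark xs 2 + 1"
  shows "pm xs 2 j < pm xs 2 i"
proof -
  have "i \<le> Nmark xs 2" using ij by simp
  show ?thesis
  proof (cases "j = Nmark xs 2 + 1")
    case True then show ?thesis using \<open>i \<le> Nmark xs 2\<close> unfolding pm_def by auto
  next
    case False
    then have j: "j \<le> Nmark xs 2" using ij by simp
    show ?thesis
    proof (cases "i = 0")
      case True then show ?thesis using ij j unfolding pm_def by auto
    next
      case False
      have "marked_parts xs 2 ! (j-1) < marked_parts xs 2 ! (i-1)"
        using sorted_wrt_nth_less[OF L, of "i-1" "j-1"] ij j False unfolding Nmark_def by simp
      then show ?thesis using ij j False unfolding pm_def by auto
    qed
  qed
qed

lemma pm_mono: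
  assumes L: "sorted_wrt (>) (marked_parts xs 2)" and ij: "i \<le> j"
  shows "pm xs 2 j \<le> pm xs 2 i"
proof (cases "i = j")
  case False
  show ?thesis
  proof (cases "j \<le> Nmark xs 2 + 1")
    case True then show ?thesis using pm_strict[OF L, of i j] ij False by simp
  next
    case False then show ?thesis using pm_beyond[of xs j] by simp
  qed
qed simp

lemma type_S0S2:
  assumes b: "1 \<le> b" "b \<le> Nmark xs 2" and P: "P2 xs b = a"
    and od: "\<forall>y\<in>set xs. odd y \<longrightarrow> y < a"
    and o1: "one_marked xs (a-1)" and o2: "a+2 \<in> set xs \<longrightarrow> one_marked xs (a+2)"
  shows "start_type xs b = S0 \<or> start_type xs b = S2"
proof -
  have "b \<le> lval xs"
    unfolding lval_def
  proof (rule Greatest_le_nat)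
    show "b \<le> Nmark xs 2 \<and> (\<forall>y\<in>set xs. odd y \<longrightarrow> ereal (real y) < pm xs 2 b)"
      using b P od unfolding pm_def P2_def by auto
  qed auto
  moreover have "one_marked xs x \<Longrightarrow> x \<in> set xs" for x
    unfolding one_marked_def by auto
  moreover obtain b' where "b = Suc b'" using b by (cases b) auto
  ultimately show ?thesis using P o1 o2 unfolding start_type_def
    by (cases b') (auto simp: Let_def)
qed


lemma inCeq_pt_D:
  assumes "inCeq_pt k r p t xs"
  shows "ereal (real (2*t+2)) \<le> pm xs 2 p" "pm xs 2 (p+1) \<le> ereal (real (2*t+2))"
    "has_2marked_of_type xs (2*t+2) S2 \<longrightarrow> pm xs 2 p = ereal (real (2*t+2))"
    "has_2marked_of_type xs (2*t+2) S0 \<longrightarrow> pm xs 2 (p+1) = ereal (real (2*t+2))"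
    "2*t+1 \<in> set xs" "\<forall>y\<in>set xs. odd y \<longrightarrow> y \<le> 2*t+1"
  using assms unfolding inCeq_pt_def by blast+

theorem theorem5p5:
  fixes \<pi> :: "nat list"
  assumes "is_partition \<pi>"
    and "inC 3 3 \<pi>"
    and "\<exists>y\<in>set \<pi>. odd y"
  shows "\<exists>!m::nat. inCeq 3 3 m \<pi>"
proof -
  have s: "sorted_wrt (\<ge>) \<pi>" using assms(1) unfolding is_partition_def by simp
  have g: "gap3 \<pi>" using assms(2) by (rule inC33_gap3)
  have dist: "\<And>i j. i < length \<pi> \<Longrightarrow> j < length \<pi> \<Longrightarrow> i \<noteq> j \<Longrightarrow> odd (\<pi>!i) \<Longrightarrow> \<pi>!i \<noteq> \<pi>!j"
    using assms(2) unfolding inC_def by blast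
  have rule: "\<And>j. j < length \<pi> \<Longrightarrow> gg \<pi> ! j = (if Suc j < length \<pi> \<and> inr (\<pi>!j) (\<pi>!Suc j) \<and> gg \<pi> ! Suc j = 1 then 2 else 1)"
    using gg_rule[OF s g] by blast
  have marks: "\<And>j. j < length \<pi> \<Longrightarrow> gg \<pi> ! j \<le> 2" using rule by simp
  define Od where "Od = {y \<in> set \<pi>. odd y}"
  have fO: "finite Od" "Od \<noteq> {}" using assms(3) unfolding Od_def by auto
  define ov where "ov = Max Od"
  have oO: "ov \<in> Od" using fO unfolding ov_def by simp
  have omax: "\<forall>y\<in>set \<pi>. odd y \<longrightarrow> y \<le> ov" using fO unfolding ov_def Od_def by auto
  have oodd: "odd ov" using oO unfolding Od_def by simp
  obtain t where ot: "ov = 2*t+1" using oO unfolding Od_def by (auto elim: oddE)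
  obtain k where k: "k < length \<pi>" "\<pi>!k = ov" using oO unfolding Od_def by (auto simp: in_set_conv_nth)
  have above: "ov < \<pi>!j \<and> even (\<pi>!j)" if "j < k" for j
  proof -
    have "\<pi>!k \<le> \<pi>!j" using sorted_wrt_nth_less[OF s that k(1)] by simp
    moreover have "\<pi>!j \<noteq> ov" using dist[of k j] that k oodd by auto
    moreover have "odd (\<pi>!j) \<Longrightarrow> \<pi>!j \<le> ov" using omax that k(1) by auto
    ultimately show ?thesis using k by auto
  qed
  have below: "\<pi>!j < ov" if "k < j" "j < length \<pi>" for j
  proof -
    have "\<pi>!j \<le> \<pi>!k" using sorted_wrt_nth_less[OF s that] by simp
    moreover have "\<pi>!j \<noteq> ov" using dist[of k j] that k oodd by auto
    ultimately show ?thesis using k by auto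
  qed
  have kk: "2 \<le> k \<Longrightarrow> k-2+2 = k" by simp
  define a where "a = 2*t+2"
  have odless: "\<forall>y\<in>set \<pi>. odd y \<longrightarrow> y < a" using omax ot a_def by auto
  have afacts: "one_marked \<pi> (a-1) \<and> (a+2 \<in> set \<pi> \<longrightarrow> one_marked \<pi> (a+2)) \<and> two_marked \<pi> a \<and> count_list \<pi> a = 1"
    if ain: "a \<in> set \<pi>"
  proof -
    obtain i where i: "i < length \<pi>" "\<pi>!i = a" using ain by (auto simp: in_set_conv_nth)
    have "i < k"
    proof (rule ccontr)
      assume "\<not> i < k"
      then have "\<pi>!i \<le> \<pi>!k" using sorted_wrt_nth_less[OF s, of k i] i by (cases "i = k") auto
      then show False using i k ot a_def by simp
    qed
    then have k1: "1 \<le> k" by simp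
    have pk1: "\<pi>!(k-1) = a"
    proof -
      have "\<pi>!(k-1) \<le> \<pi>!i" using sorted_wrt_nth_less[OF s, of i "k-1"] \<open>i < k\<close> k by (cases "i = k-1") auto
      moreover have "ov < \<pi>!(k-1)" using above[of "k-1"] k1 by simp
      ultimately show ?thesis using i ot a_def by simp
    qed
    have gk: "gg \<pi> ! k = 1"
    proof -
      have "\<not> inr (\<pi>!k) (\<pi>!Suc k)" if "Suc k < length \<pi>"
      proof -
        have "\<pi>!(k-1+2) + 2 < \<pi>!(k-1)" using g[unfolded gap3_def, rule_format, of "k-1"] that k1 pk1 a_def by auto
        then have "\<pi>!(Suc k) + 3 < ov + 2" using k1 pk1 a_def ot by simp
        then show ?thesis using k ot unfolding inr_def by auto
      qed
      then show ?thesis using rule[OF k(1)] by auto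
    qed
    have gk1: "gg \<pi> ! (k-1) = 2"
    proof -
      have "inr (\<pi>!(k-1)) (\<pi>!Suc (k-1))" using k1 pk1 k ot a_def unfolding inr_def by simp
      then show ?thesis using rule[of "k-1"] k k1 gk by simp
    qed
    have om1: "one_marked \<pi> (a-1)" unfolding one_marked_def using k gk ot a_def by auto
    have tm: "two_marked \<pi> a" unfolding two_marked_def using k k1 gk1 pk1 by (intro exI[of _ "k-1"]) auto
    have om2: "one_marked \<pi> (a+2)" if a2: "a+2 \<in> set \<pi>"
    proof -
      obtain i2 where i2: "i2 < length \<pi>" "\<pi>!i2 = a+2" using a2 by (auto simp: in_set_conv_nth)
      have "i2 < k-1"
      proof (rule ccontr)
        assume "\<not> i2 < k-1"
        then have "\<pi>!i2 \<le> \<pi>!(k-1)" using sorted_wrt_nth_less[OF s, of "k-1" i2] i2 by (cases "i2 = k-1") auto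
        then show False using i2 pk1 by simp
      qed
      then have k2: "2 \<le> k" by simp
      have "\<pi>!(k-2) \<le> \<pi>!i2" using sorted_wrt_nth_less[OF s, of i2 "k-2"] \<open>i2 < k-1\<close> k by (cases "i2 = k-2") auto
      moreover have "even (\<pi>!(k-2))" using above[of "k-2"] k2 by simp
      moreover have "\<pi>!k + 2 < \<pi>!(k-2)" using g[unfolded gap3_def, rule_format, of "k-2", unfolded kk[OF k2]] k k2 \<open>even (\<pi>!(k-2))\<close> by auto
      ultimately have pk2: "\<pi>!(k-2) = a+2" using i2 k2 k ot a_def by auto
      have "gg \<pi> ! (k-2) = 1" using rule[of "k-2"] k k2 gk1
        by (simp add: Suc_diff_Suc numeral_2_eq_2)
      then show ?thesis unfolding one_marked_def using k k2 pk2 by (intro exI[of _ "k-2"]) auto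
    qed
    have cnt: "count_list \<pi> a = 1"
    proof -
      have dec: "\<pi> = take (k-1) \<pi> @ \<pi>!(k-1) # drop k \<pi>"
        using id_take_nth_drop[of "k-1" \<pi>] k k1 by simp
      have n1: "a \<notin> set (take (k-1) \<pi>)"
      proof
        assume "a \<in> set (take (k-1) \<pi>)"
        then obtain j where j: "j < k-1" "\<pi>!j = a" by (auto simp: in_set_conv_nth)
        then have k2: "2 \<le> k" by simp
        have "\<pi>!(k-2) \<le> \<pi>!j" using sorted_wrt_nth_less[OF s, of j "k-2"] j k by (cases "j = k-2") auto
        moreover have "even (\<pi>!(k-2))" using above[of "k-2"] k2 by simp
        moreover have "\<pi>!k + 2 < \<pi>!(k-2)" using g[unfolded gap3_def, rule_format, of "k-2", unfolded kk[OF k2]] k k2 \<open>even (\<pi>!(k-2))\<close> by auto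
        ultimately show False using j k2 k ot a_def by auto
      qed
      have n2: "a \<notin> set (drop k \<pi>)"
      proof
        assume "a \<in> set (drop k \<pi>)"
        then obtain j where j: "j < length \<pi> - k" "\<pi>!(k+j) = a" by (auto simp: in_set_conv_nth)
        have "\<pi>!(k+j) \<le> ov"
        proof (cases j)
          case 0 then show ?thesis using k by simp
        next
          case (Suc j')
          then have "k < k+j" "k+j < length \<pi>" using j by auto
          then show ?thesis using below[of "k+j"] by simp
        qed
        then show False using j ot a_def by simp
      qed
      have "count_list \<pi> a = count_list (take (k-1) \<pi>) a + count_list (\<pi>!(k-1) # drop k \<pi>) a"
        by (subst dec) (simp only: count_list_append)
      then show ?thesis using n1 n2 pk1 by (simp add: count_notin)
    qed
    show ?thesis using om1 om2 tm cnt by blast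
  qed

  define N where "N = Nmark \<pi> 2"
  have Ls: "sorted_wrt (>) (marked_parts \<pi> 2)" using mp_sorted[OF s g] .
  have Pmem: "P2 \<pi> b \<in> set \<pi>" if "1 \<le> b" "b \<le> N" for b
  proof -
    have "P2 \<pi> b \<in> set (marked_parts \<pi> 2)" using that unfolding P2_def N_def Nmark_def by simp
    then show ?thesis using mem_mp[of "P2 \<pi> b" \<pi>] unfolding two_marked_def by (metis nth_mem)
  qed
  have pmfin: "1 \<le> b \<and> b \<le> N \<and> P2 \<pi> b = x" if "pm \<pi> 2 b = ereal (real x)" for b x
    using that unfolding pm_def P2_def N_def by (auto split: if_splits)
  have pmP: "pm \<pi> 2 b = ereal (real (P2 \<pi> b))" if "1 \<le> b" "b \<le> N" for b
    using that unfolding pm_def P2_def N_def by simp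
  have ainj: "b = b'" if "pm \<pi> 2 b = pm \<pi> 2 b'" "b \<le> N" "b' \<le> N" for b b'
  proof (rule ccontr)
    assume "b \<noteq> b'"
    then consider "b < b'" | "b' < b" by linarith
    then show False
    proof cases
      case 1 then show False using pm_strict[OF Ls 1] that unfolding N_def by simp
    next
      case 2 then show False using pm_strict[OF Ls 2] that unfolding N_def by simp
    qed
  qed
  have typS: "start_type \<pi> b = S0 \<or> start_type \<pi> b = S2" if "1 \<le> b" "b \<le> N" "P2 \<pi> b = a" for b
  proof -
    have "a \<in> set \<pi>" using Pmem[OF that(1,2)] that(3) by simp
    then show ?thesis using type_S0S2[of b \<pi> a] that odless afacts unfolding N_def by blast
  qed
  have uniq_p: False if lt: "p < p'" and c1: "inCeq_pt 3 3 p t \<pi>" and c2: "inCeq_pt 3 3 p' t \<pi>" for p p'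
  proof -
    note h1 = inCeq_pt_D(1-3)[OF c1, folded a_def]
    note h2 = inCeq_pt_D(1,4)[OF c2, folded a_def]
    have "pm \<pi> 2 p' \<le> pm \<pi> 2 (p+1)" using pm_mono[OF Ls, of "p+1" p'] lt by simp
    then have e1: "pm \<pi> 2 (p+1) = ereal (real a)" and e2: "pm \<pi> 2 p' = ereal (real a)"
      using h1(2) h2(1) \<open>pm \<pi> 2 p' \<le> pm \<pi> 2 (p+1)\<close> by (meson antisym order.trans)+
    have q: "1 \<le> p+1" "p+1 \<le> N" "P2 \<pi> (p+1) = a" using pmfin[OF e1] by auto
    have "p' \<le> N" using pmfin[OF e2] by auto
    have pp: "p' = p+1"
    proof (rule ccontr)
      assume "p' \<noteq> p+1"
      then have "p+1 < p'" using lt by simp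
      then have "pm \<pi> 2 p' < pm \<pi> 2 (p+1)" using pm_strict[OF Ls] \<open>p' \<le> N\<close> unfolding N_def by simp
      then show False using e1 e2 by simp
    qed
    have hb: "has_2marked_of_type \<pi> a (start_type \<pi> (p+1))"
      unfolding has_2marked_of_type_def using q unfolding N_def by blast
    from typS[OF q] show False
    proof
      assume "start_type \<pi> (p+1) = S0"
      then have "pm \<pi> 2 (p'+1) = ereal (real a)" using h2 hb by simp
      moreover have "pm \<pi> 2 (p'+1) < pm \<pi> 2 p'" using pm_strict[OF Ls, of p' "p'+1"] \<open>p' \<le> N\<close> unfolding N_def by simp
      ultimately show False using e2 by simp
    next
      assume "start_type \<pi> (p+1) = S2"
      then have "pm \<pi> 2 p = ereal (real a)" using h1 hb by simp
      moreover have "pm \<pi> 2 (p+1) < pm \<pi> 2 p" using pm_strict[OF Ls, of p "p+1"] q unfolding N_def by simp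
      ultimately show False using e1 by simp
    qed
  qed
  define p0 where "p0 = (LEAST p. pm \<pi> 2 (p+1) \<le> ereal (real a))"
  have exN: "pm \<pi> 2 (N+1) \<le> ereal (real a)" using pm_beyond[of \<pi> "N+1"] unfolding N_def by simp
  have p0a: "pm \<pi> 2 (p0+1) \<le> ereal (real a)" unfolding p0_def by (rule LeastI[of _ N]) (rule exN)
  have p0b: "ereal (real a) < pm \<pi> 2 p0"
  proof (cases "p0 = 0")
    case True then show ?thesis unfolding pm_def by simp
  next
    case False
    have "\<not> pm \<pi> 2 (p0 - 1 + 1) \<le> ereal (real a)"
      by (rule not_less_Least) (use False in \<open>simp add: p0_def\<close>)
    then show ?thesis using False by simp
  qed
  have base: "inC 3 3 \<pi> \<and> (2*t+1 \<in> set \<pi> \<and> (\<forall>y\<in>set \<pi>. odd y \<longrightarrow> y \<le> 2*t+1)) \<and>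
     (\<forall>j<length \<pi>. \<pi> ! j = 2*t+1 \<longrightarrow> gg \<pi> ! j \<le> 2)"
    using assms(2) oO omax ot marks unfolding Od_def by auto
  have exist: "\<exists>p. inCeq_pt 3 3 p t \<pi>"
  proof (cases "a \<in> set \<pi>")
    case False
    have nh: "\<not> has_2marked_of_type \<pi> a s" for s
      using Pmem False unfolding has_2marked_of_type_def N_def by auto
    have "inCeq_pt 3 3 p0 t \<pi>"
      using base p0a p0b nh[of S0] nh[of S2] False unfolding inCeq_pt_def a_def[symmetric] by (simp add: less_imp_le)
    then show ?thesis ..
  next
    case True
    note af = afacts[OF True]
    have "a \<in> set (marked_parts \<pi> 2)" using af mem_mp by blast
    then obtain i where i: "i < N" "marked_parts \<pi> 2 ! i = a"
      unfolding N_def Nmark_def by (auto simp: in_set_conv_nth)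
    define q where "q = i+1"
    have q: "1 \<le> q" "q \<le> N" "P2 \<pi> q = a" using i unfolding q_def P2_def by auto
    have pq: "pm \<pi> 2 q = ereal (real a)" using pmP[OF q(1,2)] q(3) by simp
    have qp: "q = p0+1"
    proof (rule ccontr)
      assume "q \<noteq> p0+1"
      then consider "q \<le> p0" | "p0+1 < q" by linarith
      then show False
      proof cases
        case 1 then show False using pm_mono[OF Ls 1] pq p0b by simp
      next
        case 2 then show False using pm_strict[OF Ls 2] q pq p0a unfolding N_def by simp
      qed
    qed
    have hq: "start_type \<pi> q = s" if H: "has_2marked_of_type \<pi> a s" for s
    proof -
      from H[unfolded has_2marked_of_type_def] obtain b where
        b: "1 \<le> b" "b \<le> Nmark \<pi> 2" "P2 \<pi> b = a" "start_type \<pi> b = s" by blast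
      have bN: "b \<le> N" using b(2) unfolding N_def .
      have "pm \<pi> 2 b = pm \<pi> 2 q" using pmP[OF b(1) bN] b(3) pq by simp
      then have "b = q" by (rule ainj) (use bN q(2) in simp_all)
      then show ?thesis using b(4) by simp
    qed
    from typS[OF q] show ?thesis
    proof
      assume S: "start_type \<pi> q = S0"
      have nh: "\<not> has_2marked_of_type \<pi> a S2" using hq[of S2] S by auto
      have "inCeq_pt 3 3 p0 t \<pi>"
        unfolding inCeq_pt_def a_def[symmetric]
      proof (intro conjI impI)
        show "\<exists>i\<ge>1. i \<le> p0 + 1 \<and> pm \<pi> 2 i = pm \<pi> 2 (p0 + 1) + ereal (real (4 * (p0 + 1 - i))) \<and>
             (\<exists>x. pm \<pi> 2 i = ereal (real x) \<and> count_list \<pi> x = 1)"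
          using pq qp af by (intro exI[of _ "p0+1"]) auto
      qed (use base p0a p0b nh pq qp af in \<open>simp_all add: less_imp_le\<close>)
      then show ?thesis ..
    next
      assume S: "start_type \<pi> q = S2"
      have nh: "\<not> has_2marked_of_type \<pi> a S0" using hq[of S0] S by auto
      have lt: "pm \<pi> 2 (q+1) < pm \<pi> 2 q" using pm_strict[OF Ls, of q "q+1"] q unfolding N_def by simp
      have "inCeq_pt 3 3 q t \<pi>"
        unfolding inCeq_pt_def a_def[symmetric]
        using base pq lt nh af by (simp add: less_imp_le)
      then show ?thesis ..
    qed
  qed
  have tuniq: "t' = t" if "inCeq_pt 3 3 p t' \<pi>" for p t'
  proof -
    have "2*t'+1 \<in> set \<pi>" "\<forall>y\<in>set \<pi>. odd y \<longrightarrow> y \<le> 2*t'+1" using that unfolding inCeq_pt_def by auto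
    then have "2*t'+1 \<le> ov" "ov \<le> 2*t'+1" using omax oO unfolding Od_def by auto
    then show ?thesis using ot by simp
  qed
  obtain p where P: "inCeq_pt 3 3 p t \<pi>" using exist by blast
  show ?thesis
  proof (rule ex1I[of _ "p+t"])
    show "inCeq 3 3 (p+t) \<pi>" unfolding inCeq_def using P by blast
  next
    fix m assume "inCeq 3 3 m \<pi>"
    then obtain p' t' where m: "p'+t' = m" "inCeq_pt 3 3 p' t' \<pi>" unfolding inCeq_def by blast
    have "t' = t" using tuniq m(2) by blast
    then have P': "inCeq_pt 3 3 p' t \<pi>" using m(2) by simp
    have "p' = p"
    proof (rule ccontr)
      assume "p' \<noteq> p"
      then consider "p < p'" | "p' < p" by linarith
      then show False
      proof cases
        case 1 show False by (rule uniq_p[OF 1 P P'])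
      next
        case 2 show False by (rule uniq_p[OF 2 P' P])
      qed
    qed
    then show "m = p+t" using m(1) \<open>t' = t\<close> by simp
  qed
qed

end
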